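(* Let $\mathbf{F}_q$ be a finite field of characteristic $p$ with $q>2$. For every integer $1\le k\le q-2$ and every $b\in\mathbf{F}_q$, $$N(k,b,\mathbf{F}_q\setminus\{0,1\})=\frac1q\binom{q-2}{k}+\frac1q(-1)^kR^2_k-(-1)^kS(k,k-b),$$ where $k-b$ is computed in $\mathbf{F}_q$ (the integer $k$ being viewed in the prime field $\mathbf{F}_p$).
   Context: $N(k,b,D)$ denotes the number of $k$-element subsets $\{x_1,\dots,x_k\}\subseteq D$ with $x_1+\dots+x_k=b$. Binomial coefficients $\binom{x}{m}=x(x-1)\cdots(x-m+1)/m!$ for real $x$, integer $m\ge0$ (so e.g. $\binom{0}{m}=[m=0]$ and $\binom{-1}{m}=(-1)^m$). For integers $j\ge0$ define $R^1_j=-(-1)^{\lfloor j/p\rfloor}\binom{q/p-1}{\lfloor j/p\rfloor}$ and $R^2_k=\sum_{j=0}^kR^1_j$. For an integer $k\ge0$ and $c\in\mathbf{F}_q$ define $S(k,c)=\sum_{0\le i\le k,\ i\equiv c \pmod p}R^1_i$ if $c$ lies in the prime subfield $\mathbf{F}_p$ (where $i\equiv c$ means the image of $i$ in $\mathbf{F}_p$ equals $c$), and $S(k,c)=0$ if $c\notin\mathbf{F}_p$. *)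

theory Defs
  imports Main "HOL-Library.Cardinality" Complex_Main
begin

definition Nsub :: "nat \<Rightarrow> 'a::comm_monoid_add \<Rightarrow> 'a set \<Rightarrow> nat" where
  "Nsub k b D = card {X. X \<subseteq> D \<and> card X = k \<and> finite X \<and> (\<Sum>x\<in>X. x) = b}"

definition R1 :: "nat \<Rightarrow> nat \<Rightarrow> nat \<Rightarrow> real" where
  "R1 p q j = - ((-1) ^ (j div p) * ((real q / real p - 1) gchoose (j div p)))"

definition R2 :: "nat \<Rightarrow> nat \<Rightarrow> nat \<Rightarrow> real" where
  "R2 p q k = (\<Sum>j=0..k. R1 p q j)"

definition Ssum :: "nat \<Rightarrow> nat \<Rightarrow> nat \<Rightarrow> 'a::field \<Rightarrow> real" where
  "Ssum p q k c = (if (\<exists>n::nat. c = of_nat n)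
      then (\<Sum>i\<in>{i. i \<le> k \<and> (of_nat i :: 'a) = c}. R1 p q i) else 0)"

end

theory Submission
  imports Defs
begin

lemma Nsub_0: "Nsub 0 b (A::'a::{field,finite} set) = (if b = 0 then 1 else 0)"
proof -
  have "{X. X \<subseteq> A \<and> card X = 0 \<and> finite X \<and> (\<Sum>x\<in>X. x) = b} = (if b = 0 then {{}} else {})"
    by auto
  then show ?thesis unfolding Nsub_def by simp
qed

lemma Nsub_part:
  fixes A :: "'a::{field,finite} set"
  assumes "y \<notin> A"
  shows "card {X. X \<subseteq> insert y A \<and> card X = Suc k \<and> finite X \<and> (\<Sum>x\<in>X. x) = b \<and> y \<in> X}
    = Nsub k (b - y) A"
proof -
  let ?T = "{X. X \<subseteq> A \<and> card X = k \<and> finite X \<and> (\<Sum>x\<in>X. x) = b - y}"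
  have eq: "{X. X \<subseteq> insert y A \<and> card X = Suc k \<and> finite X \<and> (\<Sum>x\<in>X. x) = b \<and> y \<in> X}
      = insert y ` ?T"
  proof (rule set_eqI, rule iffI)
    fix X assume X: "X \<in> {X. X \<subseteq> insert y A \<and> card X = Suc k \<and> finite X \<and> (\<Sum>x\<in>X. x) = b \<and> y \<in> X}"
    then have "X - {y} \<in> ?T" using assms
      by (auto simp: sum_diff1 card_Diff_singleton)
    moreover have "X = insert y (X - {y})" using X by auto
    ultimately show "X \<in> insert y ` ?T" by blast
  next
    fix X assume "X \<in> insert y ` ?T"
    then obtain Y where Y: "Y \<in> ?T" "X = insert y Y" by blast
    have "y \<notin> Y" using Y assms by auto
    then show "X \<in> {X. X \<subseteq> insert y A \<and> card X = Suc k \<and> finite X \<and> (\<Sum>x\<in>X. x) = b \<and> y \<in> X}"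
      using Y by (auto simp: sum.insert_if)
  qed
  have "inj_on (insert y) ?T"
    using assms by (intro inj_onI) (metis insert_Diff_single insert_absorb insert_ident subsetD mem_Collect_eq)
  then show ?thesis unfolding eq Nsub_def by (simp add: card_image)
qed

lemma Nsub_insert:
  fixes A :: "'a::{field,finite} set"
  assumes "y \<notin> A"
  shows "Nsub (Suc k) b (insert y A) = Nsub (Suc k) b A + Nsub k (b - y) A"
proof -
  let ?S = "{X. X \<subseteq> insert y A \<and> card X = Suc k \<and> finite X \<and> (\<Sum>x\<in>X. x) = b}"
  have "?S = {X. X \<subseteq> A \<and> card X = Suc k \<and> finite X \<and> (\<Sum>x\<in>X. x) = b}
     \<union> {X. X \<subseteq> insert y A \<and> card X = Suc k \<and> finite X \<and> (\<Sum>x\<in>X. x) = b \<and> y \<in> X}"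
    by auto
  then have "card ?S = card {X. X \<subseteq> A \<and> card X = Suc k \<and> finite X \<and> (\<Sum>x\<in>X. x) = b}
     + card {X. X \<subseteq> insert y A \<and> card X = Suc k \<and> finite X \<and> (\<Sum>x\<in>X. x) = b \<and> y \<in> X}"
    using assms by (simp add: card_Un_disjoint[symmetric]) (subst card_Un_disjoint, auto)
  then show ?thesis using Nsub_part[OF assms] unfolding Nsub_def by simp
qed

lemma double_count:
  fixes b :: "'a::{field,finite}"
  shows "Suc n * Nsub (Suc n) b UNIV = (\<Sum>y\<in>UNIV. Nsub n (b - y) (UNIV - {y}))"
proof -
  let ?S = "{X. X \<subseteq> (UNIV::'a set) \<and> card X = Suc n \<and> finite X \<and> (\<Sum>x\<in>X. x) = b}"
  have 1: "Nsub n (b - y) (UNIV - {y}) = (\<Sum>X\<in>?S. if y \<in> X then 1 else 0)" for y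
  proof -
    have "Nsub n (b - y) (UNIV - {y}) = card {X. X \<subseteq> insert y (UNIV - {y}) \<and> card X = Suc n \<and> finite X \<and> (\<Sum>x\<in>X. x) = b \<and> y \<in> X}"
      by (rule Nsub_part[symmetric]) simp
    also have "\<dots> = card {X\<in>?S. y \<in> X}" by (rule arg_cong[where f=card]) auto
    also have "\<dots> = (\<Sum>X\<in>?S. if y \<in> X then 1 else 0)"
      by (simp only: sum.inter_filter[symmetric, OF finite] card_eq_sum)
    finally show ?thesis .
  qed
  have "(\<Sum>y\<in>UNIV. Nsub n (b - y) (UNIV - {y})) = (\<Sum>y\<in>UNIV. \<Sum>X\<in>?S. if y \<in> X then 1 else 0)"
    using 1 by simp
  also have "\<dots> = (\<Sum>X\<in>?S. \<Sum>y\<in>UNIV. if y \<in> X then 1 else 0)"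
    by (rule sum.swap)
  also have "\<dots> = (\<Sum>X\<in>?S. Suc n)"
    proof (rule sum.cong)
    fix X assume "X \<in> ?S"
    have "(\<Sum>y\<in>UNIV. if y \<in> X then 1 else 0) = card {y\<in>UNIV. y \<in> X}"
      by (simp only: sum.inter_filter[symmetric, OF finite] card_eq_sum)
    then show "(\<Sum>y\<in>UNIV. if y \<in> X then 1 else 0) = Suc n" using \<open>X \<in> ?S\<close> by simp
  qed simp
  also have "\<dots> = Suc n * Nsub (Suc n) b UNIV" unfolding Nsub_def by simp
  finally show ?thesis by simp
qed


lemma G_closed:
  fixes y c :: "'a::{field,finite}"
  shows "real (Nsub n c (UNIV - {y})) = (\<Sum>j\<le>n. (-1)^j * real (Nsub (n-j) (c - of_nat j * y) UNIV))"
proof (induction n arbitrary: c)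
  case 0
  then show ?case by (simp add: Nsub_0)
next
  case (Suc n)
  have ins: "Nsub (Suc n) c (insert y (UNIV - {y})) = Nsub (Suc n) c (UNIV - {y}) + Nsub n (c - y) (UNIV - {y})"
    by (rule Nsub_insert) simp
  have U: "insert y (UNIV - {y}) = (UNIV :: 'a set)" by auto
  have "real (Nsub (Suc n) c (UNIV - {y})) = real (Nsub (Suc n) c UNIV) - real (Nsub n (c - y) (UNIV - {y}))"
    using ins U by simp
  also have "\<dots> = real (Nsub (Suc n) c UNIV) - (\<Sum>j\<le>n. (-1)^j * real (Nsub (n-j) (c - y - of_nat j * y) UNIV))"
    using Suc by simp
  also have "\<dots> = (\<Sum>j\<le>Suc n. (-1)^j * real (Nsub (Suc n-j) (c - of_nat j * y) UNIV))"
  proof -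
    have "(\<Sum>j\<le>Suc n. (-1)^j * real (Nsub (Suc n-j) (c - of_nat j * y) UNIV))
      = real (Nsub (Suc n) c UNIV) + (\<Sum>j\<le>n. (-1)^(Suc j) * real (Nsub (Suc n - Suc j) (c - of_nat (Suc j) * y) UNIV))"
      by (subst sum.atMost_Suc_shift) simp
    also have "(\<Sum>j\<le>n. (-1)^(Suc j) * real (Nsub (Suc n - Suc j) (c - of_nat (Suc j) * y) UNIV))
       = - (\<Sum>j\<le>n. (-1)^j * real (Nsub (n-j) (c - y - of_nat j * y) UNIV))"
      by (simp add: sum_negf[symmetric] algebra_simps)
    finally show ?thesis by simp
  qed
  finally show ?case .
qed

lemma scaling:
  fixes c b :: "'a::{field,finite}"
  assumes "c \<noteq> 0"
  shows "Nsub n (c * b) UNIV = Nsub n b UNIV"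
proof -
  let ?T = "{X. X \<subseteq> (UNIV::'a set) \<and> card X = n \<and> finite X \<and> (\<Sum>x\<in>X. x) = b}"
  let ?f = "\<lambda>X. (\<lambda>x. c * x) ` X"
  have injc: "inj (\<lambda>x. c * x)" using assms by (auto intro: injI)
  have cs: "card (?f X) = card X" for X using injc by (metis card_image inj_on_subset subset_UNIV)
  have ss: "(\<Sum>x\<in>?f X. x) = c * (\<Sum>x\<in>X. x)" for X
  proof -
    have "inj_on (\<lambda>x. c * x) X" using injc inj_on_subset by blast
    then show ?thesis by (simp add: sum.reindex sum_distrib_left)
  qed
  have eq: "{X. X \<subseteq> (UNIV::'a set) \<and> card X = n \<and> finite X \<and> (\<Sum>x\<in>X. x) = c * b} = ?f ` ?T"
  proof (rule set_eqI, rule iffI)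
    fix X assume X: "X \<in> {X. X \<subseteq> (UNIV::'a set) \<and> card X = n \<and> finite X \<and> (\<Sum>x\<in>X. x) = c * b}"
    let ?Y = "(\<lambda>x. inverse c * x) ` X"
    have XY: "X = ?f ?Y" using assms by (auto simp: image_image image_iff mult.assoc[symmetric])
    have "?Y \<in> ?T" using X cs[of ?Y] ss[of ?Y] XY assms
      by (auto simp: field_simps)
    then show "X \<in> ?f ` ?T" using XY by blast
  next
    fix X assume "X \<in> ?f ` ?T"
    then show "X \<in> {X. X \<subseteq> (UNIV::'a set) \<and> card X = n \<and> finite X \<and> (\<Sum>x\<in>X. x) = c * b}"
      using cs ss by auto
  qed
  have "inj_on ?f ?T"
    using injc by (intro inj_onI) (simp add: inj_image_eq_iff)
  then show ?thesis unfolding Nsub_def eq by (simp add: card_image)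
qed

definition alpha :: "'a::{field,finite} itself \<Rightarrow> nat \<Rightarrow> real" where
  "alpha _ n = real (Nsub n 0 (UNIV::'a set)) - real (Nsub n 1 (UNIV::'a set))"

lemma M_decomp:
  fixes x :: "'a::{field,finite}"
  shows "real (Nsub n x UNIV) = real (Nsub n (1::'a) UNIV) + (if x = 0 then alpha TYPE('a) n else 0)"
proof (cases "x = 0")
  case True then show ?thesis by (simp add: alpha_def)
next
  case False
  then show ?thesis using scaling[OF False, of n 1] by simp
qed

lemma sum_M:
  fixes b d :: "'a::{field,finite}"
  shows "(\<Sum>y\<in>UNIV. real (Nsub n (b - d * y) UNIV))
     = real CARD('a) * real (Nsub n (1::'a) UNIV) + alpha TYPE('a) n * real (card {y::'a. b - d * y = 0})"
proof -
  have "(\<Sum>y\<in>UNIV. real (Nsub n (b - d * y) UNIV))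
     = (\<Sum>y\<in>UNIV. real (Nsub n (1::'a) UNIV) + (if b - d * y = 0 then alpha TYPE('a) n else 0))"
    by (subst M_decomp) simp
  also have "\<dots> = real CARD('a) * real (Nsub n (1::'a) UNIV) + alpha TYPE('a) n * real (card {y::'a. b - d * y = 0})"
    by (simp add: sum.distrib sum.If_cases Collect_conv_if)
  finally show ?thesis .
qed

lemma card_sol0:
  fixes d :: "'a::{field,finite}"
  shows "card {y::'a. 0 - d * y = 0} = (if d = 0 then CARD('a) else 1)"
proof -
  have "{y::'a. 0 - d * y = 0} = (if d = 0 then UNIV else {0})" by auto
  then show ?thesis by simp
qed

lemma card_sol1:
  fixes d :: "'a::{field,finite}"
  shows "card {y::'a. 1 - d * y = 0} = (if d = 0 then 0 else 1)"
proof -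
  have "{y::'a. 1 - d * y = 0} = (if d = 0 then {} else {inverse d})"
    by (auto simp: field_simps)
  then show ?thesis by simp
qed

lemma alpha_rec:
  "real (Suc n) * alpha TYPE('a::{field,finite}) (Suc n)
    = (\<Sum>j\<le>n. (-1)^j * alpha TYPE('a) (n-j) * (if CHAR('a) dvd Suc j then real CARD('a) else 0))"
proof -
  have key: "real (Suc n) * real (Nsub (Suc n) b UNIV)
     = (\<Sum>j\<le>n. (-1)^j * (\<Sum>y\<in>UNIV. real (Nsub (n-j) (b - of_nat (Suc j) * y) UNIV)))" for b :: 'a
  proof -
    have "real (Suc n) * real (Nsub (Suc n) b UNIV) = real (Suc n * Nsub (Suc n) b UNIV)" by (simp only: of_nat_mult)
    also have "\<dots> = (\<Sum>y\<in>UNIV. real (Nsub n (b - y) (UNIV - {y})))"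
      by (subst double_count) simp
    also have "\<dots> = (\<Sum>y\<in>UNIV. \<Sum>j\<le>n. (-1)^j * real (Nsub (n-j) (b - of_nat (Suc j) * y) UNIV))"
      by (subst G_closed) (simp add: algebra_simps)
    also have "\<dots> = (\<Sum>j\<le>n. \<Sum>y\<in>UNIV. (-1)^j * real (Nsub (n-j) (b - of_nat (Suc j) * y) UNIV))"
      by (rule sum.swap)
    also have "\<dots> = (\<Sum>j\<le>n. (-1)^j * (\<Sum>y\<in>UNIV. real (Nsub (n-j) (b - of_nat (Suc j) * y) UNIV)))"
      by (simp add: sum_distrib_left)
    finally show ?thesis .
  qed
  have "real (Suc n) * alpha TYPE('a) (Suc n)
     = real (Suc n) * real (Nsub (Suc n) (0::'a) UNIV) - real (Suc n) * real (Nsub (Suc n) (1::'a) UNIV)"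
    by (simp add: alpha_def algebra_simps)
  also have "\<dots> = (\<Sum>j\<le>n. (-1)^j * ((\<Sum>y\<in>UNIV. real (Nsub (n-j) ((0::'a) - of_nat (Suc j) * y) UNIV))
       - (\<Sum>y\<in>UNIV. real (Nsub (n-j) ((1::'a) - of_nat (Suc j) * y) UNIV))))"
    unfolding key by (simp only: right_diff_distrib sum_subtractf)
  also have "\<dots> = (\<Sum>j\<le>n. (-1)^j * alpha TYPE('a) (n-j) * (if CHAR('a) dvd Suc j then real CARD('a) else 0))"
  proof (rule sum.cong[OF refl])
    fix j
    have d: "(of_nat (Suc j) :: 'a) = 0 \<longleftrightarrow> CHAR('a) dvd Suc j"
      by (rule of_nat_eq_0_iff_char_dvd)
    show "(-1)^j * ((\<Sum>y\<in>UNIV. real (Nsub (n-j) ((0::'a) - of_nat (Suc j) * y) UNIV))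
       - (\<Sum>y\<in>UNIV. real (Nsub (n-j) ((1::'a) - of_nat (Suc j) * y) UNIV)))
      = (-1)^j * alpha TYPE('a) (n-j) * (if CHAR('a) dvd Suc j then real CARD('a) else 0)"
      unfolding sum_M card_sol0 card_sol1 d[symmetric]
      by (simp add: algebra_simps)
  qed
  finally show ?thesis .
qed


definition Acl :: "nat \<Rightarrow> real \<Rightarrow> nat \<Rightarrow> real" where
  "Acl p Q n = (if p dvd n then (-1)^(n + n div p) * (Q gchoose (n div p)) else 0)"

lemma altsum: "(\<Sum>i<Suc m. (-1)^(m+i) * ((Q::real) gchoose i)) = (Q - 1) gchoose m"
proof (induction m)
  case 0 then show ?case by simp
next
  case (Suc m)
  have "(\<Sum>i<Suc (Suc m). (-1)^(Suc m+i) * (Q gchoose i))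
      = (-1)^(Suc m + Suc m) * (Q gchoose Suc m) + (\<Sum>i<Suc m. (-1)^(Suc m+i) * (Q gchoose i))"
    by simp
  also have "(-1::real)^(Suc m + Suc m) = 1" by (simp add: power_add[symmetric] mult_2[symmetric] power_mult)
  also have "(\<Sum>i<Suc m. (-1)^(Suc m+i) * (Q gchoose i)) = - (\<Sum>i<Suc m. (-1)^(m+i) * (Q gchoose i))"
    by (simp add: sum_negf[symmetric])
  also have "1 * (Q gchoose Suc m) + - (\<Sum>i<Suc m. (-1)^(m+i) * (Q gchoose i)) = (Q gchoose Suc m) - ((Q - 1) gchoose m)"
    using Suc by simp
  also have "\<dots> = (Q - 1) gchoose Suc m"
    using gbinomial_Suc_Suc[of "Q - 1" m] by simp
  finally show ?case .
qed

lemma absorb_alt: "real (Suc m) * ((Q::real) gchoose Suc m) = Q * (\<Sum>i<Suc m. (-1)^(m+i) * (Q gchoose i))"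
  using gbinomial_absorption[of m Q] altsum[of m Q] by simp

lemma Acl_rec:
  assumes p: "p > 0"
  shows "real (Suc n) * Acl p Q (Suc n)
    = (\<Sum>j\<le>n. (-1)^j * Acl p Q (n-j) * (if p dvd Suc j then real p * Q else 0))"
proof (cases "p dvd Suc n")
  case False
  have z: "(-1)^j * Acl p Q (n-j) * (if p dvd Suc j then real p * Q else 0) = 0" if "j \<le> n" for j
  proof -
    have "Suc n = Suc j + (n - j)" using that by simp
    then have "\<not> (p dvd Suc j \<and> p dvd (n - j))" using False by (metis dvd_add)
    then show ?thesis by (auto simp: Acl_def)
  qed
  have "Acl p Q (Suc n) = 0" using False by (simp add: Acl_def)
  moreover have "(\<Sum>j\<le>n. (-1)^j * Acl p Q (n-j) * (if p dvd Suc j then real p * Q else 0)) = 0"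
    using z by (intro sum.neutral) auto
  ultimately show ?thesis by simp
next
  case True
  then obtain M where M: "Suc n = p * M" by blast
  have "M \<noteq> 0" using M by (cases M) auto
  then obtain m where m: "M = Suc m" using not0_implies_Suc by blast
  define h where "h j = (-1)^j * Acl p Q (n-j) * (if p dvd Suc j then real p * Q else 0)" for j
  define \<phi> where "\<phi> i = n - p * i" for i
  have pi_le: "p * i \<le> n" if "i < M" for i
  proof -
    have "p * i \<le> p * m" using that m by simp
    also have "\<dots> < p * M" using m p by simp
    finally have "p * i < Suc n" using M by metis
    then show ?thesis by simp
  qed
  have sub: "\<phi> ` {..<M} \<subseteq> {..n}" unfolding \<phi>_def by auto
  have zero: "h j = 0" if "j \<in> {..n} - \<phi> ` {..<M}" for j
  proof (rule ccontr)
    assume nz: "h j \<noteq> 0"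
    then have d1: "p dvd Suc j" and d2: "p dvd (n - j)" unfolding h_def Acl_def by (auto split: if_splits)
    have jn: "j \<le> n" using that by simp
    obtain i where i: "n - j = p * i" using d2 by blast
    have "p * i < p * M" using i jn M by (metis diff_le_self le_imp_less_Suc)
    then have "i < M" using p by simp
    moreover have "j = \<phi> i" unfolding \<phi>_def using i jn by simp
    ultimately show False using that by auto
  qed
  have "(\<Sum>j\<le>n. h j) = (\<Sum>j\<in>\<phi> ` {..<M}. h j)"
    using sub zero by (intro sum.mono_neutral_right) auto
  also have "\<dots> = (\<Sum>i<M. h (\<phi> i))"
  proof (rule sum.reindex[unfolded comp_def])
    show "inj_on \<phi> {..<M}"
    proof (rule inj_onI)
      fix x y assume "x \<in> {..<M}" "y \<in> {..<M}" "\<phi> x = \<phi> y"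
      then have "p * x = p * y" using pi_le[of x] pi_le[of y] unfolding \<phi>_def by (metis lessThan_iff diff_diff_cancel)
      then show "x = y" using p by simp
    qed
  qed
  also have "\<dots> = (\<Sum>i<M. real p * Q * ((-1)^n * ((-1)^i * (Q gchoose i))))"
  proof (rule sum.cong[OF refl])
    fix i assume "i \<in> {..<M}"
    then have le: "p * i \<le> n" using pi_le by simp
    have s1: "Suc (\<phi> i) = p * (M - i)" unfolding \<phi>_def using le M by (simp add: diff_mult_distrib2)
    have s2: "n - \<phi> i = p * i" unfolding \<phi>_def using le by simp
    have sg: "(-1::real)^(\<phi> i) * (-1)^(p * i) = (-1)^n"
      unfolding \<phi>_def power_add[symmetric] using le by simp
    have "h (\<phi> i) = (-1)^(\<phi> i) * ((-1)^(p*i + i) * (Q gchoose i)) * (real p * Q)"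
      unfolding h_def Acl_def s1 s2 using p by simp
    also have "\<dots> = ((-1)^(\<phi> i) * (-1)^(p * i)) * (-1)^i * (Q gchoose i) * (real p * Q)"
      by (simp add: power_add)
    also have "\<dots> = real p * Q * ((-1)^n * ((-1)^i * (Q gchoose i)))"
      unfolding sg by simp
    finally show "h (\<phi> i) = real p * Q * ((-1)^n * ((-1)^i * (Q gchoose i)))" .
  qed
  also have "\<dots> = real p * Q * (-1)^n * (\<Sum>i<M. (-1)^i * (Q gchoose i))"
    by (simp add: sum_distrib_left mult.assoc)
  finally have rhs: "(\<Sum>j\<le>n. h j) = real p * Q * (-1)^n * (\<Sum>i<M. (-1)^i * (Q gchoose i))" .
  have sm: "(\<Sum>i<M. (-1)^(m+i) * (Q gchoose i)) = (-1)^m * (\<Sum>i<M. (-1)^i * (Q gchoose i))"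
    by (simp add: sum_distrib_left power_add mult.assoc)
  have divs: "Suc n div p = M" using M p by simp
  have "real (Suc n) * Acl p Q (Suc n) = real p * ((-1)^(Suc n + M) * (real M * (Q gchoose M)))"
    unfolding Acl_def divs using True M by simp
  also have "real M * (Q gchoose M) = Q * ((-1)^m * (\<Sum>i<M. (-1)^i * (Q gchoose i)))"
    using absorb_alt[of m Q] sm m by simp
  also have "(-1::real)^(Suc n + M) * (Q * ((-1)^m * (\<Sum>i<M. (-1)^i * (Q gchoose i))))
     = Q * (-1)^n * (\<Sum>i<M. (-1)^i * (Q gchoose i))"
  proof -
    have "(-1::real)^(Suc n + M) * (-1)^m = (-1)^n * ((-1)^(m+m) * (-1)^2)"
      unfolding m power_add[symmetric] by (simp add: algebra_simps)
    also have "\<dots> = (-1)^n" by (simp add: mult_2[symmetric] power_mult)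
    finally show ?thesis by (metis (no_types, lifting) mult.assoc mult.commute)
  qed
  finally show ?thesis using rhs unfolding h_def by (simp add: mult.assoc)
qed


lemma CHAR_pos_fin: "CHAR('a::{field,finite}) > 0"
  by (rule finite_imp_CHAR_pos) simp

lemma CHAR_ge2: "CHAR('a::{field,finite}) \<ge> 2"
proof -
  have "CHAR('a) \<noteq> Suc 0" by simp
  then show ?thesis using CHAR_pos_fin[where 'a='a] by linarith
qed

lemma alpha_closed:
  "alpha TYPE('a::{field,finite}) n = Acl CHAR('a) (real CARD('a) / real CHAR('a)) n"
proof (induction n rule: less_induct)
  case (less n)
  let ?p = "CHAR('a)" and ?Q = "real CARD('a) / real CHAR('a)"
  have pQ: "real ?p * ?Q = real CARD('a)" using CHAR_pos_fin[where 'a='a] by simp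
  show ?case
  proof (cases n)
    case 0
    then show ?thesis by (simp add: alpha_def Acl_def Nsub_0)
  next
    case (Suc m)
    have "real (Suc m) * alpha TYPE('a) (Suc m)
       = (\<Sum>j\<le>m. (-1)^j * alpha TYPE('a) (m-j) * (if ?p dvd Suc j then real CARD('a) else 0))"
      by (rule alpha_rec)
    also have "\<dots> = (\<Sum>j\<le>m. (-1)^j * Acl ?p ?Q (m-j) * (if ?p dvd Suc j then real ?p * ?Q else 0))"
      using less Suc pQ by (intro sum.cong) auto
    also have "\<dots> = real (Suc m) * Acl ?p ?Q (Suc m)"
      by (rule Acl_rec[symmetric]) (rule CHAR_pos_fin)
    finally show ?thesis using Suc by simp
  qed
qed

lemma sum_Nsub_all:
  "(\<Sum>b\<in>UNIV. Nsub n (b::'a::{field,finite}) UNIV) = CARD('a) choose n"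
proof -
  let ?S = "{X. X \<subseteq> (UNIV::'a set) \<and> card X = n}"
  let ?A = "\<lambda>b. {X. X \<subseteq> (UNIV::'a set) \<and> card X = n \<and> finite X \<and> (\<Sum>x\<in>X. x) = b}"
  have "?S = (\<Union>b\<in>UNIV. ?A b)" by auto
  then have "card ?S = (\<Sum>b\<in>UNIV. card (?A b))"
    by (simp only:) (rule card_UN_disjoint, auto)
  then show ?thesis using n_subsets[of "UNIV::'a set" n] unfolding Nsub_def by simp
qed

lemma M_closed:
  fixes b :: "'a::{field,finite}"
  shows "real (Nsub n b UNIV) = (real (CARD('a) choose n) - alpha TYPE('a) n) / real CARD('a)
     + (if b = 0 then alpha TYPE('a) n else 0)"
proof -
  have "real (CARD('a) choose n) = (\<Sum>b\<in>UNIV. real (Nsub n (b::'a) UNIV))"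
    using sum_Nsub_all[of n, where 'a='a] by (metis of_nat_sum)
  also have "\<dots> = (\<Sum>b\<in>(UNIV::'a set). real (Nsub n (1::'a) UNIV) + (if b = 0 then alpha TYPE('a) n else 0))"
    by (subst M_decomp) simp
  also have "\<dots> = real CARD('a) * real (Nsub n (1::'a) UNIV) + alpha TYPE('a) n"
    by (simp add: sum.distrib)
  finally have "real (Nsub n (1::'a) UNIV) = (real (CARD('a) choose n) - alpha TYPE('a) n) / real CARD('a)"
    by (simp add: field_simps)
  then show ?thesis by (subst M_decomp) simp
qed


definition Fcl :: "nat \<Rightarrow> nat \<Rightarrow> nat \<Rightarrow> 'a::field \<Rightarrow> real" where
  "Fcl p q k b = (1 / real q) * real ((q - 2) choose k)
        + (1 / real q) * (-1) ^ k * R2 p q k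
        - (-1) ^ k * Ssum p q k (of_nat k - b)"

lemma R2_Suc: "R2 p q (Suc k) = R2 p q k + R1 p q (Suc k)"
  unfolding R2_def by simp

lemma R2_0: "R2 p q 0 = R1 p q 0" unfolding R2_def by simp

lemma R1_0: "R1 p q 0 = -1" unfolding R1_def by simp

lemma R1_1: "p \<ge> 2 \<Longrightarrow> R1 p q 1 = -1" unfolding R1_def by simp

lemma Ssum_Suc:
  fixes c :: "'a::field"
  shows "Ssum p q (Suc k) c = Ssum p q k c + (if (\<exists>n::nat. c = of_nat n) \<and> of_nat (Suc k) = c then R1 p q (Suc k) else 0)"
proof (cases "\<exists>n::nat. c = of_nat n")
  case False then show ?thesis unfolding Ssum_def by simp
next
  case True
  have eq: "{i. i \<le> Suc k \<and> (of_nat i :: 'a) = c} = {i. i \<le> k \<and> (of_nat i :: 'a) = c} \<union> (if of_nat (Suc k) = c then {Suc k} else {})"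
    by (auto simp: le_Suc_eq)
  show ?thesis
    unfolding Ssum_def using True by (simp add: eq sum.union_disjoint)
qed

lemma Ssum_0:
  fixes c :: "'a::field"
  shows "Ssum p q 0 c = (if c = 0 then R1 p q 0 else 0)"
proof -
  have eq: "{i. i \<le> 0 \<and> (of_nat i :: 'a) = c} = (if c = 0 then {0} else {})" by auto
  have ex: "\<exists>n::nat. (0::'a) = of_nat n" by (rule exI[of _ 0]) simp
  show ?thesis unfolding Ssum_def eq using ex by auto
qed

lemma div_Suc_cases:
  assumes "(p::nat) > 0"
  shows "Suc k div p = (if p dvd Suc k then Suc (k div p) else k div p)"
  using assms by (simp add: div_Suc dvd_eq_mod_eq_0)

lemma R1_diff:
  assumes p: "(p::nat) > 0"
  shows "R1 p q (Suc k) - R1 p q k = (if p dvd Suc k then - ((-1) ^ (Suc k div p) * ((real q / real p) gchoose (Suc k div p))) else 0)"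
proof (cases "p dvd Suc k")
  case True
  then have d: "Suc k div p = Suc (k div p)" using div_Suc_cases[OF p] by simp
  let ?a = "real q / real p - 1"
  have "(real q / real p) gchoose Suc (k div p) = (?a + 1) gchoose Suc (k div p)" by simp
  also have "\<dots> = (?a gchoose (k div p)) + (?a gchoose Suc (k div p))" by (rule gbinomial_Suc_Suc)
  finally have g: "(real q / real p) gchoose Suc (k div p) = (?a gchoose (k div p)) + (?a gchoose Suc (k div p))" .
  show ?thesis unfolding R1_def d using True g by (simp add: algebra_simps)
next
  case False
  then have d: "Suc k div p = k div p" using div_Suc_cases[OF p] by simp
  show ?thesis unfolding R1_def d using False by simp
qed

lemma alg:
  fixes q CK C0 C1 C2 RK RK1 Rk r1 r2 SKc1 SK1c1 SK1c2 Skc2 s d :: real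
  assumes "CK = C0 + 2*C1 + C2" "RK = RK1 + r2" "RK1 = Rk + r1"
    "SKc1 = SK1c1 + d*r2" "SK1c2 = Skc2 + d*r1" "q \<noteq> 0"
  shows "((1/q)*C2 + (1/q)*s*RK - s*SKc1) + ((1/q)*C1 + (1/q)*(-s)*RK1 - (-s)*SK1c2)
     + ((1/q)*C1 + (1/q)*(-s)*RK1 - (-s)*SK1c1) + ((1/q)*C0 + (1/q)*s*Rk - s*Skc2)
     = (CK - s*(r1 - r2))/q + d*(s*(r1-r2))"
  using assms by (simp add: field_simps)


lemma f_rec2:
  fixes b :: "'a::{field,finite}"
  shows "Nsub (Suc (Suc k)) b UNIV = Nsub (Suc (Suc k)) b (UNIV - {0,1}) + Nsub (Suc k) b (UNIV - {0,1})
     + Nsub (Suc k) (b - 1) (UNIV - {0,1}) + Nsub k (b - 1) (UNIV - {0,1})"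
proof -
  have U: "(UNIV::'a set) = insert 1 (insert 0 (UNIV - {0,1}))" by auto
  have "Nsub (Suc (Suc k)) b (insert 1 (insert 0 (UNIV - {0,1})))
     = Nsub (Suc (Suc k)) b (insert 0 (UNIV - {0,1})) + Nsub (Suc k) (b - 1) (insert 0 (UNIV - {0,1::'a}))"
    by (rule Nsub_insert) simp
  also have "Nsub (Suc (Suc k)) b (insert 0 (UNIV - {0,1})) = Nsub (Suc (Suc k)) b (UNIV - {0,1::'a}) + Nsub (Suc k) (b - 0) (UNIV - {0,1})"
    by (rule Nsub_insert) simp
  also have "Nsub (Suc k) (b - 1) (insert 0 (UNIV - {0,1})) = Nsub (Suc k) (b - 1) (UNIV - {0,1::'a}) + Nsub k (b - 1 - 0) (UNIV - {0,1})"
    by (rule Nsub_insert) simp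
  finally show ?thesis using U by simp
qed

lemma f_rec1:
  fixes b :: "'a::{field,finite}"
  shows "Nsub (Suc 0) b UNIV = Nsub (Suc 0) b (UNIV - {0,1}) + Nsub 0 b (UNIV - {0,1})
     + Nsub 0 (b - 1) (UNIV - {0,1})"
proof -
  have U: "(UNIV::'a set) = insert 1 (insert 0 (UNIV - {0,1}))" by auto
  have "Nsub (Suc 0) b (insert 1 (insert 0 (UNIV - {0,1})))
     = Nsub (Suc 0) b (insert 0 (UNIV - {0,1})) + Nsub 0 (b - 1) (insert 0 (UNIV - {0,1::'a}))"
    by (rule Nsub_insert) simp
  also have "Nsub (Suc 0) b (insert 0 (UNIV - {0,1})) = Nsub (Suc 0) b (UNIV - {0,1::'a}) + Nsub 0 (b - 0) (UNIV - {0,1})"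
    by (rule Nsub_insert) simp
  finally show ?thesis using U by (simp add: Nsub_0)
qed

lemma F_step:
  fixes b :: "'a::{field,finite}"
  assumes q: "q = CARD('a)" and p: "p = CHAR('a)" and q2: "q \<ge> 2"
  shows "Fcl p q (Suc (Suc k)) b + Fcl p q (Suc k) b + Fcl p q (Suc k) (b - 1) + Fcl p q k (b - 1)
    = real (Nsub (Suc (Suc k)) b UNIV)"
proof -
  let ?K = "Suc (Suc k)"
  let ?s = "(-1::real)^k"
  let ?d = "if b = 0 then 1 else (0::real)"
  let ?r1 = "R1 p q (Suc k)" and ?r2 = "R1 p q ?K"
  let ?c1 = "(of_nat ?K :: 'a) - b" and ?c2 = "(of_nat (Suc k) :: 'a) - b"
  have p0: "p > 0" using p CHAR_pos_fin by blast
  have qne: "real q \<noteq> 0" using q2 by simp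
  have CK: "real (q choose ?K) = real ((q-2) choose k) + 2 * real ((q-2) choose Suc k) + real ((q-2) choose ?K)"
  proof -
    obtain n where n: "q = Suc (Suc n)" using q2 by (metis add_2_eq_Suc le_Suc_ex)
    show ?thesis unfolding n by (simp add: binomial_Suc_Suc)
  qed
  have A: "Acl p (real q / real p) ?K = ?s * (?r1 - ?r2)"
    using R1_diff[OF p0, of q "Suc k"]
    by (auto simp: Acl_def power_add)
  have M: "real (Nsub ?K b UNIV) = (real (q choose ?K) - ?s * (?r1 - ?r2)) / real q + ?d * (?s * (?r1 - ?r2))"
    using M_closed[of ?K b] alpha_closed[of ?K, where 'a='a] A q p by simp
  have S1: "Ssum p q ?K ?c1 = Ssum p q (Suc k) ?c1 + ?d * ?r2"
  proof -
    have ex: "b = 0 \<Longrightarrow> \<exists>n::nat. ?c1 = of_nat n" by (rule exI[of _ ?K]) simp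
    have "((\<exists>n::nat. ?c1 = of_nat n) \<and> of_nat ?K = ?c1) \<longleftrightarrow> b = 0" using ex by auto
    then show ?thesis by (subst Ssum_Suc) simp
  qed
  have S2: "Ssum p q (Suc k) ?c2 = Ssum p q k ?c2 + ?d * ?r1"
  proof -
    have ex: "b = 0 \<Longrightarrow> \<exists>n::nat. ?c2 = of_nat n" by (rule exI[of _ "Suc k"]) simp
    have "((\<exists>n::nat. ?c2 = of_nat n) \<and> of_nat (Suc k) = ?c2) \<longleftrightarrow> b = 0" using ex by auto
    then show ?thesis by (subst Ssum_Suc) simp
  qed
  have e1: "(of_nat (Suc k) :: 'a) - (b - 1) = ?c1" by simp
  have e2: "(of_nat k :: 'a) - (b - 1) = ?c2" by simp
  have F1: "Fcl p q ?K b = (1/real q)*real ((q-2) choose ?K) + (1/real q)*?s*R2 p q ?K - ?s*Ssum p q ?K ?c1"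
    unfolding Fcl_def by simp
  have F2: "Fcl p q (Suc k) b = (1/real q)*real ((q-2) choose Suc k) + (1/real q)*(-?s)*R2 p q (Suc k) - (-?s)*Ssum p q (Suc k) ?c2"
    unfolding Fcl_def by simp
  have F3: "Fcl p q (Suc k) (b-1) = (1/real q)*real ((q-2) choose Suc k) + (1/real q)*(-?s)*R2 p q (Suc k) - (-?s)*Ssum p q (Suc k) ?c1"
    unfolding Fcl_def e1 by simp
  have F4: "Fcl p q k (b-1) = (1/real q)*real ((q-2) choose k) + (1/real q)*?s*R2 p q k - ?s*Ssum p q k ?c2"
    unfolding Fcl_def e2 by simp
  show ?thesis unfolding F1 F2 F3 F4 M
    by (rule alg[OF CK R2_Suc R2_Suc S1 S2 qne])
qed


lemma F_0:
  fixes b :: "'a::field"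
  assumes "q > 0"
  shows "Fcl p q 0 b = (if b = 0 then 1 else 0)"
  using assms unfolding Fcl_def by (simp add: R2_0 R1_0 Ssum_0)

lemma F_1:
  fixes b :: "'a::field"
  assumes "q \<ge> 2" "p \<ge> 2"
  shows "Fcl p q 1 b = 1 - (if b = 0 then 1 else 0) - (if b = 1 then 1 else 0)"
proof -
  have R2: "R2 p q 1 = -2" using R2_Suc[of p q 0] R2_0 R1_0 R1_1[OF assms(2)] by simp
  have ex1: "\<exists>n::nat. (1::'a) - b = of_nat n" if "b = 0" using that by (intro exI[of _ 1]) simp
  have S: "Ssum p q 1 ((1::'a) - b) = - (if b = 0 then 1 else 0) - (if b = 1 then 1 else 0)"
    using Ssum_Suc[of p q 0 "1 - b"] Ssum_0[of p q "1 - b"] R1_0 R1_1[OF assms(2)] ex1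
    by (auto simp: eq_commute[of "1::'a"])
  have C: "real ((q - 2) choose 1) = real q - 2" using assms by simp
  show ?thesis unfolding Fcl_def using R2 S C assms by (simp add: field_simps)
qed

lemma main:
  fixes b :: "'a::{field,finite}"
  assumes q: "q = CARD('a)" and p: "p = CHAR('a)" and q2: "q \<ge> 2"
  shows "real (Nsub k b (UNIV - {0,1})) = Fcl p q k b"
proof (induction k arbitrary: b rule: nat_less_induct)
  case (1 n)
  have p2: "p \<ge> 2" using p CHAR_ge2 by blast
  show ?case
  proof (cases n)
    case 0
    then show ?thesis using F_0[of q p b] q2 by (simp add: Nsub_0)
  next
    case (Suc m)
    show ?thesis
    proof (cases m)
      case 0
      have "Acl p (real q / real p) 1 = 0" using p2 by (simp add: Acl_def)
      then have M1: "real (Nsub (Suc 0) b UNIV) = 1"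
        using M_closed[of 1 b] alpha_closed[of 1, where 'a='a] q p q2 by simp
      have "real (Nsub (Suc 0) b (UNIV - {0,1})) = 1 - (if b = 0 then 1 else 0) - (if b = 1 then 1 else 0)"
      proof -
        have r: "real (Nsub (Suc 0) b UNIV) = real (Nsub (Suc 0) b (UNIV - {0,1})) + (if b = 0 then 1 else 0) + (if b = 1 then 1 else 0)"
          using f_rec1[of b] by (simp add: Nsub_0)
        show ?thesis using r M1 by linarith
      qed
      then show ?thesis using Suc 0 F_1[OF q2 p2, of b] by simp
    next
      case (Suc k)
      have IH1: "real (Nsub (Suc k) c (UNIV - {0,1})) = Fcl p q (Suc k) c" for c :: 'a
        using "1" \<open>n = Suc m\<close> Suc by simp
      have IH0: "real (Nsub k c (UNIV - {0,1})) = Fcl p q k c" for c :: 'a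
        using "1" \<open>n = Suc m\<close> Suc by simp
      have "real (Nsub (Suc (Suc k)) b (UNIV - {0,1}))
          = real (Nsub (Suc (Suc k)) b UNIV) - Fcl p q (Suc k) b - Fcl p q (Suc k) (b - 1) - Fcl p q k (b - 1)"
        using f_rec2[of k b] IH1[of b] IH1[of "b-1"] IH0[of "b-1"] by simp
      also have "\<dots> = Fcl p q (Suc (Suc k)) b"
        using F_step[OF q p q2, of k b] by simp
      finally show ?thesis using \<open>n = Suc m\<close> Suc by simp
    qed
  qed
qed

theorem theorem1p3:
  fixes b :: "'a::{field,finite}" and k p q :: nat
  assumes "q = CARD('a)" and "p = CHAR('a)" and "q > 2"
    and "1 \<le> k" and "k \<le> q - 2"
  shows "real (Nsub k b (UNIV - {0, 1}))
      = (1 / real q) * real ((q - 2) choose k)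
        + (1 / real q) * (-1) ^ k * R2 p q k
        - (-1) ^ k * Ssum p q k (of_nat k - b)"
  using main[OF assms(1,2), of k b] assms(3) unfolding Fcl_def by simp

end
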